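(* Let $a>0$ and let $P_+^a(x_i)$ denote the smallest $x>x_i$ at which the solution of $y'=-ay-\sin(3\pi x/2)$ with $y(x_i)=0$ vanishes. Then $P_+^a(\tfrac{10}{3})\in(4,\tfrac{14}{3})$ for all $a>0$. Moreover, for every $\delta_1>0$ (small) there exists $a_1>0$ (large) such that $P_+^a(\tfrac{10}{3})\in(4,4+\delta_1)$ for all $a\in(a_1,+\infty)$. *)

theory Defs
  imports Complex_Main
begin

definition ode_sol :: "real \<Rightarrow> real \<Rightarrow> (real \<Rightarrow> real)" where
  "ode_sol a xi = (THE y. y xi = 0 \<and>
      (\<forall>x. (y has_real_derivative (- a * y x - sin (3 * pi * x / 2))) (at x)))"

definition P_plus :: "real \<Rightarrow> real \<Rightarrow> real" where
  "P_plus a xi = Inf {x. x > xi \<and> ode_sol a xi x = 0}"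

end

theory Submission
  imports Defs
begin

definition Ysol :: "real \<Rightarrow> real \<Rightarrow> real" where
  "Ysol a x = ((3*pi/2) * cos (3*pi*x/2) - a * sin (3*pi*x/2) + (3*pi/2) * exp (-a*(x - 10/3)))
      / (a^2 + (3*pi/2)^2)"

lemma Ysol_deriv: "(Ysol a has_real_derivative (- a * Ysol a x - sin (3 * pi * x / 2))) (at x)"
proof -
  have P: "(3*pi/2)^2 > 0" by simp
  have D: "a^2 + (3*pi/2)^2 \<noteq> 0" using P zero_le_power2[of a] by linarith
  let ?w = "3*pi/2::real"
  have 1: "((\<lambda>x. cos (3*pi*x/2)) has_real_derivative (- sin (3*pi*x/2) * ?w)) (at x)"
    by (auto intro!: derivative_eq_intros)
  have 2: "((\<lambda>x. sin (3*pi*x/2)) has_real_derivative (cos (3*pi*x/2) * ?w)) (at x)"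
    by (auto intro!: derivative_eq_intros)
  have 3: "((\<lambda>x. exp (-a*(x - 10/3))) has_real_derivative (exp (-a*(x - 10/3)) * (-a))) (at x)"
    by (auto intro!: derivative_eq_intros)
  have 4: "((\<lambda>x. (?w * cos (3*pi*x/2) - a * sin (3*pi*x/2) + ?w * exp (-a*(x - 10/3)))
      / (a^2 + ?w^2)) has_real_derivative
      ((?w * (- sin (3*pi*x/2) * ?w) - a * (cos (3*pi*x/2) * ?w) + ?w * (exp (-a*(x - 10/3)) * (-a)))
      / (a^2 + ?w^2))) (at x)"
    by (intro DERIV_cdivide DERIV_add DERIV_diff DERIV_cmult 1 2 3)
  have 5: "((?w * (- sin (3*pi*x/2) * ?w) - a * (cos (3*pi*x/2) * ?w) + ?w * (exp (-a*(x - 10/3)) * (-a)))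
      / (a^2 + ?w^2)) = - a * Ysol a x - sin (3 * pi * x / 2)"
    unfolding Ysol_def using D by (simp add: field_simps power2_eq_square)
  show ?thesis using 4 unfolding 5 Ysol_def[abs_def] .
qed

lemma Ysol_start: "Ysol a (10/3) = 0"
proof -
  have "3*pi*(10/3)/2 = 5 * pi" by simp
  then show ?thesis unfolding Ysol_def by simp
qed

lemma uniq:
  fixes y z :: "real \<Rightarrow> real"
  assumes "\<forall>x. (y has_real_derivative (- a * y x - f x)) (at x)"
    and "\<forall>x. (z has_real_derivative (- a * z x - f x)) (at x)"
    and "y pt = z pt"
  shows "y = z"
proof
  fix x
  let ?d = "\<lambda>x. exp (a*x) * (y x - z x)"
  have "\<forall>t. (?d has_real_derivative 0) (at t)"
  proof
    fix t
    have "(?d has_real_derivative (exp (a*t) * a * (y t - z t) + exp (a*t) * ((- a * y t - f t) - (- a * z t - f t)))) (at t)"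
      using assms(1,2) by (intro derivative_eq_intros refl) auto
    then show "(?d has_real_derivative 0) (at t)" by (simp add: algebra_simps)
  qed
  then have "?d x = ?d pt" by (rule DERIV_isconst_all)
  then show "y x = z x" using assms(3) by simp
qed

lemma ode_sol_eq: "ode_sol a (10/3) = Ysol a"
  unfolding ode_sol_def
proof (rule the_equality)
  show "Ysol a (10/3) = 0 \<and> (\<forall>x. (Ysol a has_real_derivative (- a * Ysol a x - sin (3 * pi * x / 2))) (at x))"
    using Ysol_start Ysol_deriv by auto
next
  fix y assume "y (10/3) = 0 \<and> (\<forall>x. (y has_real_derivative (- a * y x - sin (3 * pi * x / 2))) (at x))"
  then show "y = Ysol a" using Ysol_deriv Ysol_start
    by (intro uniq[where pt = "10/3" and f="\<lambda>x. sin (3*pi*x/2)" and a=a]) auto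
qed


lemma Ysol_cont: "isCont (Ysol a) x"
  using Ysol_deriv DERIV_isCont by blast

lemma sin_neg: assumes "10/3 < x" "x < 4" shows "sin (3*pi*x/2) < 0"
proof -
  let ?t = "3*pi*x/2 - 4*pi"
  have "sin (3*pi*x/2) = sin (?t + 2*pi + 2*pi)" by simp
  also have "\<dots> = sin ?t" by (simp only: sin_periodic)
  also have "\<dots> < 0"
  proof (rule sin_lt_zero)
    have "3*pi*x/2 > 3*pi*(10/3)/2" using assms pi_gt_zero by (intro divide_strict_right_mono mult_strict_left_mono) auto
    then show "pi < ?t" by simp
    have "3*pi*x/2 < 3*pi*4/2" using assms pi_gt_zero by (intro divide_strict_right_mono mult_strict_left_mono) auto
    then show "?t < 2*pi" by simp
  qed
  finally show ?thesis .
qed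

lemma Ysol_pos: assumes "10/3 < x" "x \<le> 4" shows "Ysol a x > 0"
proof -
  let ?H = "\<lambda>t. exp (a*(t - 10/3)) * Ysol a t"
  have dH: "(?H has_real_derivative (- exp (a*(t - 10/3)) * sin (3*pi*t/2))) (at t)" for t
  proof -
    have "(?H has_real_derivative (exp (a*(t - 10/3)) * a * Ysol a t + exp (a*(t - 10/3)) * (- a * Ysol a t - sin (3 * pi * t / 2)))) (at t)"
      using Ysol_deriv[of a t] by (intro derivative_eq_intros refl) auto
    then show ?thesis by (simp add: algebra_simps)
  qed
  have "?H (10/3) < ?H x"
  proof (rule DERIV_pos_imp_increasing_open[OF assms(1)])
    fix t assume "10/3 < t" "t < x"
    then have "sin (3*pi*t/2) < 0" using assms by (intro sin_neg) auto
    then show "\<exists>y. (?H has_real_derivative y) (at t) \<and> 0 < y" using dH by (intro exI[of _ "- exp (a*(t - 10/3)) * sin (3*pi*t/2)"]) (auto simp: mult_pos_neg)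
  next
    show "continuous_on {10/3..x} ?H"
      using dH by (intro continuous_at_imp_continuous_on ballI DERIV_isCont) blast
  qed
  then have "0 < exp (a*(x - 10/3)) * Ysol a x" by (simp add: Ysol_start)
  then show ?thesis by (simp add: zero_less_mult_iff)
qed

lemma Dpos: "(a::real)^2 + (3*pi/2)^2 > 0"
proof -
  have P: "(3*pi/2)^2 > 0" by simp
  then show ?thesis using zero_le_power2[of a] by linarith
qed

lemma Ysol_end: assumes "a > 0" shows "Ysol a (14/3) < 0"
proof -
  have e: "3*pi*(14/3)/2 = 7 * pi" by simp
  have "exp (-a*(14/3 - 10/3)) < 1" using assms by simp
  then have "(3*pi/2) * cos (3*pi*(14/3)/2) - a * sin (3*pi*(14/3)/2) + (3*pi/2) * exp (-a*(14/3 - 10/3)) < 0"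
    unfolding e using pi_gt_zero by simp
  then show ?thesis unfolding Ysol_def using Dpos[of a] by (simp add: divide_neg_pos)
qed

lemma Ysol_near: assumes "0 < e" "e \<le> 1/2" "a > 2 * (3*pi/2) / sin (3*pi/2*e)" "a \<ge> 0"
  shows "Ysol a (4 + e) < 0"
proof -
  let ?u = "3*pi/2*e"
  have su: "sin ?u > 0"
  proof (rule sin_gt_zero)
    show "0 < ?u" using assms by simp
    have "?u \<le> 3*pi/2*(1/2)" using assms pi_gt_zero by (intro mult_left_mono) auto
    then show "?u < pi" using pi_gt_zero by linarith
  qed
  have e: "3*pi*(4+e)/2 = ?u + 2*pi + 2*pi + 2*pi" by (simp add: field_simps)
  have s: "sin (3*pi*(4+e)/2) = sin ?u" unfolding e by (simp only: sin_periodic)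
  have c: "cos (3*pi*(4+e)/2) = cos ?u" unfolding e by (simp only: cos_periodic)
  have ex: "exp (-a*(4 + e - 10/3)) \<le> 1" using assms by simp
  have "a * sin ?u > 2 * (3*pi/2)" using assms(3) su by (simp add: pos_divide_less_eq mult.commute)
  moreover have "(3*pi/2) * cos ?u \<le> 3*pi/2" using pi_gt_zero by simp
  moreover have "(3*pi/2) * exp (-a*(4 + e - 10/3)) \<le> 3*pi/2" using pi_gt_zero ex by simp
  ultimately have "(3*pi/2) * cos (3*pi*(4+e)/2) - a * sin (3*pi*(4+e)/2) + (3*pi/2) * exp (-a*(4+e - 10/3)) < 0"
    unfolding s c by linarith
  then show ?thesis unfolding Ysol_def using Dpos[of a] by (simp add: divide_neg_pos)
qed

lemma key: assumes "4 < b" "Ysol a b < 0" shows "P_plus a (10/3) \<in> {4<..<b}"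
proof -
  let ?S = "{x. x > 10/3 \<and> ode_sol a (10/3) x = 0}"
  have S: "?S = {x. x > 10/3 \<and> Ysol a x = 0}" by (simp add: ode_sol_eq)
  have y4: "Ysol a 4 > 0" by (rule Ysol_pos) auto
  obtain r where r: "r > 0" "\<forall>x. x \<noteq> 4 \<and> \<bar>4 - x\<bar> < r \<longrightarrow> 0 < Ysol a x"
    using LIM_fun_gt_zero[of "Ysol a" "Ysol a 4" 4] Ysol_cont[where a=a and x=4] y4 by (auto simp: isCont_def)
  have low: "4 + r \<le> s" if "s \<in> ?S" for s
  proof (rule ccontr)
    assume "\<not> 4 + r \<le> s"
    moreover have "s > 10/3" "Ysol a s = 0" using that S by auto
    ultimately show False
    proof (cases "s \<le> 4")
      case True
      then show ?thesis using Ysol_pos[of s a] \<open>s > 10/3\<close> \<open>Ysol a s = 0\<close> by simp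
    next
      case False
      then have "s \<noteq> 4 \<and> \<bar>4 - s\<bar> < r" using \<open>\<not> 4 + r \<le> s\<close> by auto
      then show ?thesis using r(2) \<open>Ysol a s = 0\<close> by fastforce
    qed
  qed
  obtain z where z: "4 \<le> z" "z \<le> b" "Ysol a z = 0"
    using IVT2[of "Ysol a" b 0 4] assms y4 Ysol_cont by force
  have zS: "z \<in> ?S" using z y4 S by (cases "z = 4") auto
  have zb: "z < b" using z assms by (cases "z = b") auto
  have "4 + r \<le> Inf ?S" using zS low by (intro cInf_greatest) auto
  moreover have "Inf ?S \<le> z" using zS low by (intro cInf_lower) (auto simp: bdd_below_def)
  ultimately show ?thesis unfolding P_plus_def using r zb by auto
qed

theorem lemma4:
  shows "(\<forall>a::real. a > 0 \<longrightarrow> P_plus a (10/3) \<in> {4<..<14/3}) \<and>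
         (\<forall>\<delta>1::real. \<delta>1 > 0 \<longrightarrow>
            (\<exists>a1::real. a1 > 0 \<and> (\<forall>a. a > a1 \<longrightarrow> P_plus a (10/3) \<in> {4<..<4 + \<delta>1})))"
proof (intro conjI allI impI)
  fix a :: real assume "a > 0"
  then show "P_plus a (10/3) \<in> {4<..<14/3}" by (intro key) (simp_all add: Ysol_end)
next
  fix d :: real assume d: "d > 0"
  define e where "e = min (d/2) (1/2)"
  have e: "0 < e" "e \<le> 1/2" "e < d" using d by (auto simp: e_def)
  have su: "sin (3*pi/2*e) > 0"
  proof (rule sin_gt_zero)
    show "0 < 3*pi/2*e" using e by simp
    have "3*pi/2*e \<le> 3*pi/2*(1/2)" using e pi_gt_zero by (intro mult_left_mono) auto
    then show "3*pi/2*e < pi" using pi_gt_zero by linarith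
  qed
  define a1 where "a1 = 2 * (3*pi/2) / sin (3*pi/2*e)"
  have a1: "a1 > 0" unfolding a1_def using su by simp
  show "\<exists>a1>0. \<forall>a>a1. P_plus a (10/3) \<in> {4<..<4 + d}"
  proof (intro exI[of _ a1] conjI allI impI a1)
    fix a assume "a > a1"
    then have "Ysol a (4 + e) < 0" using e a1 by (intro Ysol_near) (auto simp: a1_def)
    then have "P_plus a (10/3) \<in> {4<..<4 + e}" using e by (intro key) auto
    then show "P_plus a (10/3) \<in> {4<..<4 + d}" using e by auto
  qed
qed

end
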